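(* Let $T$ and $A$ be closed Hermitian subspaces in $X^2$ and $S$ a self-adjoint subspace in $X^2$, with $D(T)=D(S)=:D\subset D(A)$ and $T=S+A$. Then $$A(0)\subset S(0)=T(0),$$ and, with $Q:A(0)^\perp\to S(0)^\perp$ the orthogonal projection, $$T_sx=S_sx+QA_sx\quad\text{for all }x\in D.$$
   Context: $X$ is a complex Hilbert space and $X^2=X\times X$ carries the inner product $\langle (x,f),(y,g)\rangle=\langle x,y\rangle+\langle f,g\rangle$. A subspace $T$ in $X^2$ means a linear subspace of $X^2$ (a linear relation); a linear operator in $X$ is identified with its graph. Notation: $D(T)=\{x:(x,f)\in T \text{ for some } f\}$, $T(x)=\{f:(x,f)\in T\}$. The adjoint is $T^*=\{(y,g)\in X^2:\langle g,x\rangle=\langle y,f\rangle \text{ for all }(x,f)\in T\}$; $T$ is Hermitian if $T\subset T^*$ and self-adjoint if $T=T^*$. For subspaces $S,A$ in $X^2$, $S+A=\{(x,f+g):(x,f)\in S,(x,g)\in A\}$. For a closed subspace $T$, set $T_\infty=\{(0,g)\in X^2:(0,g)\in T\}$ and $T_s=T\ominus T_\infty$ (orthogonal complement of $T_\infty$ in $T$), so $T=T_s\oplus T_\infty$; $T_s$ is the graph of a linear operator (the operator part of $T$) with $D(T_s)=D(T)$ and $R(T_s)\subset T(0)^\perp$. *)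

theory Defs
  imports "HOL-Analysis.Analysis"
begin

class cvector = real_vector +
  fixes scaleC :: "complex \<Rightarrow> 'a \<Rightarrow> 'a" (infixr \<open>*\<^sub>C\<close> 75)
  assumes scaleC_add_right: "a *\<^sub>C (x + y) = a *\<^sub>C x + a *\<^sub>C y"
    and scaleC_add_left: "(a + b) *\<^sub>C x = a *\<^sub>C x + b *\<^sub>C x"
    and scaleC_scaleC: "a *\<^sub>C (b *\<^sub>C x) = (a * b) *\<^sub>C x"
    and scaleC_one: "1 *\<^sub>C x = x"
    and scaleR_scaleC: "scaleR r = scaleC (complex_of_real r)"

class complex_inner = cvector + real_normed_vector +
  fixes cinner :: "'a \<Rightarrow> 'a \<Rightarrow> complex"
  assumes cinner_commute: "cinner x y = cnj (cinner y x)"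
    and cinner_add_left: "cinner (x + y) z = cinner x z + cinner y z"
    and cinner_scaleC_left: "cinner (a *\<^sub>C x) y = a * cinner x y"
    and cinner_real: "Im (cinner x x) = 0"
    and cinner_ge_zero: "0 \<le> Re (cinner x x)"
    and cinner_eq_zero_iff: "cinner x x = 0 \<longleftrightarrow> x = 0"
    and norm_eq_sqrt_cinner: "norm x = sqrt (Re (cinner x x))"

class complex_hilbert = complex_inner + complete_space

definition pinner :: "'a::complex_inner \<times> 'a \<Rightarrow> 'a \<times> 'a \<Rightarrow> complex" where
  "pinner p q = cinner (fst p) (fst q) + cinner (snd p) (snd q)"

definition lin_rel :: "('a::complex_inner \<times> 'a) set \<Rightarrow> bool" where
  "lin_rel T \<longleftrightarrow> (0, 0) \<in> T
     \<and> (\<forall>x f y g. (x, f) \<in> T \<longrightarrow> (y, g) \<in> T \<longrightarrow> (x + y, f + g) \<in> T)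
     \<and> (\<forall>c x f. (x, f) \<in> T \<longrightarrow> (c *\<^sub>C x, c *\<^sub>C f) \<in> T)"

definition rdom :: "('a \<times> 'a) set \<Rightarrow> 'a set" where
  "rdom T = {x. \<exists>f. (x, f) \<in> T}"

definition rimg :: "('a \<times> 'a) set \<Rightarrow> 'a \<Rightarrow> 'a set" where
  "rimg T x = {f. (x, f) \<in> T}"

definition adjoint :: "('a::complex_inner \<times> 'a) set \<Rightarrow> ('a \<times> 'a) set" where
  "adjoint T = {(y, g). \<forall>x f. (x, f) \<in> T \<longrightarrow> cinner g x = cinner y f}"

definition hermitian :: "('a::complex_inner \<times> 'a) set \<Rightarrow> bool" where
  "hermitian T \<longleftrightarrow> T \<subseteq> adjoint T"

definition selfadjoint :: "('a::complex_inner \<times> 'a) set \<Rightarrow> bool" where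
  "selfadjoint T \<longleftrightarrow> T = adjoint T"

definition rel_sum :: "('a::complex_inner \<times> 'a) set \<Rightarrow> ('a \<times> 'a) set \<Rightarrow> ('a \<times> 'a) set" where
  "rel_sum S A = {(x, f + g) | x f g. (x, f) \<in> S \<and> (x, g) \<in> A}"

definition rel_inf :: "('a::complex_inner \<times> 'a) set \<Rightarrow> ('a \<times> 'a) set" where
  "rel_inf T = {(0, g) | g. (0, g) \<in> T}"

definition rel_ominus :: "('a::complex_inner \<times> 'a) set \<Rightarrow> ('a \<times> 'a) set \<Rightarrow> ('a \<times> 'a) set" where
  "rel_ominus T U = {p \<in> T. \<forall>q \<in> U. pinner p q = 0}"

definition rel_s :: "('a::complex_inner \<times> 'a) set \<Rightarrow> ('a \<times> 'a) set" where
  "rel_s T = rel_ominus T (rel_inf T)"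

definition op_part :: "('a::complex_inner \<times> 'a) set \<Rightarrow> 'a \<Rightarrow> 'a" where
  "op_part T x = (THE f. (x, f) \<in> rel_s T)"

definition orth :: "'a::complex_inner set \<Rightarrow> 'a set" where
  "orth M = {v. \<forall>m \<in> M. cinner v m = 0}"

definition oproj :: "'a::complex_inner set \<Rightarrow> 'a \<Rightarrow> 'a" where
  "oproj M v = (THE w. w \<in> M \<and> (\<forall>m \<in> M. cinner (v - w) m = 0))"

end

theory Submission
  imports Defs
begin

lemma scaleC_zero_left[simp]: "0 *\<^sub>C (x::'a::cvector) = 0"
  using fun_cong[OF scaleR_scaleC[of 0], of x] by simp

lemma scaleC_minus1: "(-1) *\<^sub>C (x::'a::cvector) = - x"
  using fun_cong[OF scaleR_scaleC[of "-1"], of x] by simp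

lemma scaleC_zero_right[simp]: "a *\<^sub>C (0::'a::cvector) = 0"
proof -
  have "a *\<^sub>C (0 + 0::'a) = a *\<^sub>C 0 + a *\<^sub>C 0" by (rule scaleC_add_right)
  then show ?thesis by simp
qed

lemma cinner_zero_left[simp]: "cinner 0 (y::'a::complex_inner) = 0"
proof -
  have "cinner (0 + 0::'a) y = cinner 0 y + cinner 0 y" by (rule cinner_add_left)
  then show ?thesis by simp
qed

lemma cinner_zero_right[simp]: "cinner (x::'a::complex_inner) 0 = 0"
  by (subst cinner_commute) simp

lemma cinner_minus_left: "cinner (- x) (y::'a::complex_inner) = - cinner x y"
proof -
  have "cinner (x + - x) y = cinner x y + cinner (-x) y" by (rule cinner_add_left)
  then have "cinner x y + cinner (-x) y = 0" by simp
  then show ?thesis by (simp add: add_eq_0_iff)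
qed

lemma cinner_diff_left: "cinner (x - y) (z::'a::complex_inner) = cinner x z - cinner y z"
  using cinner_add_left[of x "-y" z] cinner_minus_left[of y z] by simp

lemma cinner_add_right: "cinner (x::'a::complex_inner) (y + z) = cinner x y + cinner x z"
proof -
  have "cinner x (y + z) = cnj (cinner (y+z) x)" by (rule cinner_commute)
  also have "\<dots> = cnj (cinner y x) + cnj (cinner z x)" by (simp add: cinner_add_left)
  also have "\<dots> = cinner x y + cinner x z" by (simp only: cinner_commute[of x y] cinner_commute[of x z] complex_cnj_cnj)
  finally show ?thesis .
qed

lemma cinner_diff_right: "cinner (x::'a::complex_inner) (y - z) = cinner x y - cinner x z"
proof -
  have "cinner x (y - z) = cnj (cinner (y-z) x)" by (rule cinner_commute)
  also have "\<dots> = cnj (cinner y x) - cnj (cinner z x)" by (simp add: cinner_diff_left)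
  also have "\<dots> = cinner x y - cinner x z" by (simp only: cinner_commute[of x y] cinner_commute[of x z] complex_cnj_cnj)
  finally show ?thesis .
qed

lemma cinner_scaleC_right: "cinner (x::'a::complex_inner) (a *\<^sub>C y) = cnj a * cinner x y"
proof -
  have "cinner x (a *\<^sub>C y) = cnj (cinner (a *\<^sub>C y) x)" by (rule cinner_commute)
  also have "\<dots> = cnj a * cnj (cinner y x)" by (simp add: cinner_scaleC_left)
  also have "\<dots> = cnj a * cinner x y" by (simp only: cinner_commute[of x y] complex_cnj_cnj)
  finally show ?thesis .
qed

lemma cinner_self: "cinner x (x::'a::complex_inner) = complex_of_real ((norm x)\<^sup>2)"
  using cinner_real[of x] cinner_ge_zero[of x] norm_eq_sqrt_cinner[of x]
  by (simp add: complex_eq_iff)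

lemma orth0_sym: "cinner x (y::'a::complex_inner) = 0 \<longleftrightarrow> cinner y x = 0"
  by (subst cinner_commute) simp

lemma expand:
  fixes s :: real and u m :: "'a::complex_inner"
  shows "(norm (u - (complex_of_real s * cinner u m) *\<^sub>C m))\<^sup>2
     = (norm u)\<^sup>2 - 2 * s * (cmod (cinner u m))\<^sup>2 + s\<^sup>2 * (cmod (cinner u m))\<^sup>2 * (norm m)\<^sup>2"
proof -
  define c where "c = cinner u m"
  let ?t = "complex_of_real s * c"
  have cm: "cinner m u = cnj c" unfolding c_def by (rule cinner_commute)
  have "cinner (u - ?t *\<^sub>C m) (u - ?t *\<^sub>C m)
     = cinner u u - cnj ?t * c - ?t * cnj c + ?t * cnj ?t * cinner m m"
    unfolding cinner_diff_left cinner_diff_right cinner_scaleC_left cinner_scaleC_right cm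
    by (simp add: c_def algebra_simps)
  also have "\<dots> = complex_of_real ((norm u)\<^sup>2 - 2 * s * (cmod c)\<^sup>2 + s\<^sup>2 * (cmod c)\<^sup>2 * (norm m)\<^sup>2)"
    unfolding cinner_self using complex_norm_square[of c]
    by (simp add: algebra_simps power2_eq_square)
  finally show ?thesis unfolding c_def cinner_self of_real_eq_iff .
qed

lemma cauchy_schwarz: "cmod (cinner x y) \<le> norm x * norm (y::'a::complex_inner)"
proof (cases "y = 0")
  case True then show ?thesis by simp
next
  case False
  let ?c = "cinner x y"
  have ny: "norm y > 0" using False by simp
  have "0 \<le> (norm (x - (complex_of_real (1 / (norm y)\<^sup>2) * ?c) *\<^sub>C y))\<^sup>2" by simp
  also have "\<dots> = (norm x)\<^sup>2 - (cmod ?c)\<^sup>2 / (norm y)\<^sup>2"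
    unfolding expand using ny by (simp add: field_simps power2_eq_square)
  finally have "(cmod ?c)\<^sup>2 \<le> (norm x * norm y)\<^sup>2"
    using ny by (simp add: field_simps power_mult_distrib)
  then show ?thesis using power2_le_imp_le by force
qed

lemma bounded_linear_cinner_left: "bounded_linear (\<lambda>v::'a::complex_inner. cinner v m)"
proof (rule bounded_linear_intro[where K="norm m"])
  show "cinner (x + y) m = cinner x m + cinner y m" for x y by (rule cinner_add_left)
  show "cinner (r *\<^sub>R x) m = r *\<^sub>R cinner x m" for r x
    by (simp add: scaleR_scaleC cinner_scaleC_left scaleR_conv_of_real)
  show "norm (cinner x m) \<le> norm x * norm m" for x by (rule cauchy_schwarz)
qed

lemma closed_orth: "closed (orth (M::'a::complex_inner set))"
proof -
  have "orth M = (\<Inter>m\<in>M. (\<lambda>v. cinner v m) -` {0})" unfolding orth_def by auto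
  moreover have "closed ((\<lambda>v::'a. cinner v m) -` {0})" for m
    by (rule continuous_closed_vimage) (auto intro: linear_continuous_at bounded_linear_cinner_left)
  ultimately show ?thesis by auto
qed


definition csub :: "'a::complex_inner set \<Rightarrow> bool" where
  "csub M \<longleftrightarrow> 0 \<in> M \<and> (\<forall>x\<in>M. \<forall>y\<in>M. x + y \<in> M) \<and> (\<forall>c. \<forall>x\<in>M. c *\<^sub>C x \<in> M)"

lemma csub_diff: "csub M \<Longrightarrow> x \<in> M \<Longrightarrow> y \<in> M \<Longrightarrow> x - y \<in> M"
  unfolding csub_def using scaleC_minus1[of y]
  by (metis diff_conv_add_uminus)

lemma parallelogram:
  "(norm (a + b))\<^sup>2 + (norm (a - b))\<^sup>2 = 2 * (norm a)\<^sup>2 + 2 * (norm (b::'a::complex_inner))\<^sup>2"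
proof -
  have "cinner (a + b) (a + b) + cinner (a - b) (a - b) = 2 * cinner a a + 2 * cinner b b"
    unfolding cinner_add_left cinner_add_right cinner_diff_left cinner_diff_right
    by simp
  then show ?thesis unfolding cinner_self
    by (metis (mono_tags, lifting) of_real_add of_real_eq_iff of_real_mult of_real_numeral)
qed

lemma proj_exists:
  fixes M :: "'a::complex_hilbert set" and v :: 'a
  assumes sub: "csub M" and cl: "closed M"
  shows "\<exists>w\<in>M. \<forall>m\<in>M. cinner (v - w) m = 0"
proof -
  have M0: "0 \<in> M" and Madd: "\<And>x y. x\<in>M \<Longrightarrow> y\<in>M \<Longrightarrow> x+y \<in> M"
    and Msc: "\<And>c x. x\<in>M \<Longrightarrow> c *\<^sub>C x \<in> M" using sub unfolding csub_def by auto
  define F where "F = (\<lambda>m. (norm (v - m))\<^sup>2) ` M"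
  define D where "D = Inf F"
  have Fne: "F \<noteq> {}" using M0 by (auto simp: F_def)
  have Fbdd: "bdd_below F" unfolding F_def by (rule bdd_belowI[of _ 0]) auto
  have Dle: "D \<le> (norm (v - m))\<^sup>2" if "m \<in> M" for m
    unfolding D_def using Fbdd that by (auto intro!: cInf_lower simp: F_def)
  have "\<forall>n. \<exists>m\<in>M. (norm (v - m))\<^sup>2 < D + 1 / real (Suc n)"
  proof
    fix n
    have "Inf F < D + 1 / real (Suc n)" by (simp add: D_def)
    from cInf_lessD[OF Fne this] show "\<exists>m\<in>M. (norm (v - m))\<^sup>2 < D + 1 / real (Suc n)"
      by (auto simp: F_def)
  qed
  then obtain ms where msM: "\<And>n. ms n \<in> M"
    and msD: "\<And>n. (norm (v - ms n))\<^sup>2 < D + 1 / real (Suc n)" by metis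
  have mid: "(norm (ms k - ms n))\<^sup>2 \<le> 2 / real (Suc n) + 2 / real (Suc k)" for n k
  proof -
    let ?a = "v - ms n" and ?b = "v - ms k" and ?z = "v - (1/2::real) *\<^sub>R (ms n + ms k)"
    have par: "(norm (?a + ?b))\<^sup>2 + (norm (?a - ?b))\<^sup>2 = 2*(norm ?a)\<^sup>2 + 2*(norm ?b)\<^sup>2"
      by (rule parallelogram)
    have e1: "?a + ?b = 2 *\<^sub>R ?z" by (simp add: algebra_simps scaleR_2)
    have e2: "(norm (?a + ?b))\<^sup>2 = 4 * (norm ?z)\<^sup>2" unfolding e1
      by (simp add: power2_eq_square)
    have e3: "?a - ?b = ms k - ms n" by simp
    have "(1/2::real) *\<^sub>R (ms n + ms k) \<in> M"
      unfolding scaleR_scaleC by (intro Msc Madd msM)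
    then have "D \<le> (norm ?z)\<^sup>2" by (rule Dle)
    moreover have par2: "(norm (?a + ?b))\<^sup>2 + (norm (ms k - ms n))\<^sup>2 = 2*(norm ?a)\<^sup>2 + 2*(norm ?b)\<^sup>2"
      using par unfolding e3 .
    ultimately show ?thesis using e2 msD[of n] msD[of k] by linarith
  qed
  have cau: "Cauchy ms"
  proof (rule CauchyI)
    fix e :: real assume e: "0 < e"
    obtain N :: nat where N: "4 / e\<^sup>2 < real N" using reals_Archimedean2 by blast
    show "\<exists>N. \<forall>m\<ge>N. \<forall>n\<ge>N. norm (ms m - ms n) < e"
    proof (intro exI allI impI)
      fix m n assume mN: "N \<le> m" and nN: "N \<le> n"
      have e2p: "0 < e\<^sup>2" using e by simp
      have hN: "2 / real (Suc N) < e\<^sup>2 / 2"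
      proof -
        have "4 < e\<^sup>2 * real N" using N e2p by (simp add: field_simps)
        then have "4 < e\<^sup>2 * real (Suc N)" using e2p by (simp add: algebra_simps add_pos_pos add.commute less_add_same_cancel2 add_strict_increasing2)
        then show ?thesis by (simp add: field_simps)
      qed
      have "2 / real (Suc n) \<le> 2 / real (Suc N)" using nN by (simp add: frac_le)
      moreover have "2 / real (Suc m) \<le> 2 / real (Suc N)" using mN by (simp add: frac_le)
      ultimately have "(norm (ms m - ms n))\<^sup>2 < e\<^sup>2" using mid[of m n] hN by linarith
      then show "norm (ms m - ms n) < e" using e by (simp add: power_less_imp_less_base)
    qed
  qed
  then obtain w where lim: "ms \<longlonglongrightarrow> w" using Cauchy_convergent convergent_def by blast
  have wM: "w \<in> M" by (rule closed_sequentially[OF cl msM lim])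
  have l1: "(\<lambda>n. (norm (v - ms n))\<^sup>2) \<longlonglongrightarrow> (norm (v - w))\<^sup>2" by (intro tendsto_intros lim)
  have "(\<lambda>n. 1 / real (Suc n)) \<longlonglongrightarrow> 0"
    using LIMSEQ_inverse_real_of_nat by (simp add: inverse_eq_divide)
  then have l2: "(\<lambda>n. D + 1 / real (Suc n)) \<longlonglongrightarrow> D"
    using tendsto_add[of "\<lambda>_. D" D sequentially] by fastforce
  have wD: "(norm (v - w))\<^sup>2 \<le> D"
    by (rule LIMSEQ_le[OF l1 l2]) (use msD in \<open>auto intro: less_imp_le\<close>)
  show ?thesis
  proof (intro bexI[OF _ wM] ballI)
    fix m assume mM: "m \<in> M"
    define u where "u = v - w"
    define c where "c = cinner u m"
    define s where "s = 1 / ((norm m)\<^sup>2 + 1)"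
    have np: "0 < (norm m)\<^sup>2 + 1" by (simp add: add_nonneg_pos)
    have sp: "s > 0" using np by (simp add: s_def)
    have sl: "s * (norm m)\<^sup>2 < 1" using np unfolding s_def by (simp add: field_simps)
    have "w + (complex_of_real s * c) *\<^sub>C m \<in> M" using Madd Msc wM mM by blast
    then have "D \<le> (norm (v - (w + (complex_of_real s * c) *\<^sub>C m)))\<^sup>2" by (rule Dle)
    also have "v - (w + (complex_of_real s * c) *\<^sub>C m) = u - (complex_of_real s * cinner u m) *\<^sub>C m"
      by (simp add: u_def c_def)
    also have "(norm \<dots>)\<^sup>2 = (norm u)\<^sup>2 - 2 * s * (cmod c)\<^sup>2 + s\<^sup>2 * (cmod c)\<^sup>2 * (norm m)\<^sup>2"
      unfolding expand c_def ..
    finally have h: "D \<le> (norm u)\<^sup>2 - 2 * s * (cmod c)\<^sup>2 + s\<^sup>2 * (cmod c)\<^sup>2 * (norm m)\<^sup>2" .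
    have eq: "(cmod c)\<^sup>2 * (s * (2 - s*(norm m)\<^sup>2)) = 2 * s * (cmod c)\<^sup>2 - s\<^sup>2 * (cmod c)\<^sup>2 * (norm m)\<^sup>2"
      by (simp add: algebra_simps power2_eq_square)
    have le: "(cmod c)\<^sup>2 * (s * (2 - s*(norm m)\<^sup>2)) \<le> 0" using h wD eq unfolding u_def by linarith
    have pos: "s * (2 - s*(norm m)\<^sup>2) > 0" using sp sl by simp
    have "(cmod c)\<^sup>2 \<le> 0" using le pos by (metis mult_le_0_iff not_le)
    then show "cinner (v - w) m = 0" unfolding c_def u_def by simp
  qed
qed

lemma oproj_props:
  fixes M :: "'a::complex_hilbert set"
  assumes sub: "csub M" and cl: "closed M"
  shows "oproj M v \<in> M \<and> (\<forall>m\<in>M. cinner (v - oproj M v) m = 0)"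
proof -
  have "\<exists>!w. w \<in> M \<and> (\<forall>m\<in>M. cinner (v - w) m = 0)"
  proof -
    obtain w where w: "w \<in> M" "\<forall>m\<in>M. cinner (v - w) m = 0" using proj_exists[OF sub cl] by blast
    have "w' = w" if "w' \<in> M" "\<forall>m\<in>M. cinner (v - w') m = 0" for w'
    proof -
      have z: "w - w' \<in> M" using csub_diff[OF sub w(1) that(1)] .
      have a: "cinner (v - w') (w - w') = 0" using z that(2) by blast
      have b: "cinner (v - w) (w - w') = 0" using z w(2) by blast
      have "cinner (w - w') (w - w') = cinner ((v - w') - (v - w)) (w - w')" by simp
      also have "\<dots> = 0" unfolding cinner_diff_left[of "v - w'"] using a b by simp
      finally have "cinner (w - w') (w - w') = 0" .
      then have "w - w' = 0" by (simp only: cinner_eq_zero_iff)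
      then show ?thesis by simp
    qed
    with w show ?thesis by blast
  qed
  then show ?thesis unfolding oproj_def by (rule theI')
qed


lemma csub_orth: "csub (orth (N::'a::complex_inner set))"
  unfolding csub_def orth_def by (simp add: cinner_add_left cinner_scaleC_left)

lemma orth_mono: "N \<subseteq> K \<Longrightarrow> orth K \<subseteq> orth N"
  unfolding orth_def by auto

lemma sub_orth_orth: "(N::'a::complex_inner set) \<subseteq> orth (orth N)"
  unfolding orth_def using orth0_sym by blast

lemma orth3: "orth (orth (orth (N::'a::complex_inner set))) = orth N"
  by (meson antisym orth_mono sub_orth_orth)

lemma lin_add: "lin_rel T \<Longrightarrow> (x, f) \<in> T \<Longrightarrow> (y, g) \<in> T \<Longrightarrow> (x + y, f + g) \<in> T"
  unfolding lin_rel_def by blast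

lemma lin_scale: "lin_rel T \<Longrightarrow> (x, f) \<in> T \<Longrightarrow> (c *\<^sub>C x, c *\<^sub>C f) \<in> T"
  unfolding lin_rel_def by blast

lemma lin_diff: "lin_rel T \<Longrightarrow> (x, f) \<in> T \<Longrightarrow> (y, g) \<in> T \<Longrightarrow> (x - y, f - g) \<in> T"
  using lin_add[of T x f "-y" "-g"] lin_scale[of T y g "-1"] by (simp add: scaleC_minus1)

lemma rimg_csub: "lin_rel T \<Longrightarrow> csub (rimg T 0)"
  unfolding csub_def rimg_def using lin_add[of T 0 _ 0] lin_scale[of T 0 _] by (auto simp: lin_rel_def)

lemma rel_s_iff: "(x, f) \<in> rel_s T \<longleftrightarrow> (x, f) \<in> T \<and> f \<in> orth (rimg T 0)"
  unfolding rel_s_def rel_ominus_def rel_inf_def pinner_def rimg_def orth_def by auto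

lemma op_part_eq:
  assumes "lin_rel T" "(x, f) \<in> T" "f \<in> orth (rimg T 0)"
  shows "op_part T x = f"
  unfolding op_part_def
proof (rule the_equality)
  show "(x, f) \<in> rel_s T" using assms by (simp add: rel_s_iff)
  fix f' assume "(x, f') \<in> rel_s T"
  then have f': "(x, f') \<in> T" "f' \<in> orth (rimg T 0)" by (auto simp: rel_s_iff)
  have "(x - x, f' - f) \<in> T" by (rule lin_diff[OF assms(1) f'(1) assms(2)])
  then have z: "f' - f \<in> rimg T 0" by (simp add: rimg_def)
  have "cinner (f' - f) (f' - f) = cinner f' (f' - f) - cinner f (f' - f)" by (rule cinner_diff_left)
  also have "\<dots> = 0" using z f'(2) assms(3) unfolding orth_def by simp
  finally have "f' - f = 0" by (simp only: cinner_eq_zero_iff)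
  then show "f' = f" by simp
qed

theorem theorem3p2:
  fixes T S A :: "('a::complex_hilbert \<times> 'a) set"
  assumes "lin_rel T" and "closed T" and "hermitian T"
    and "lin_rel A" and "closed A" and "hermitian A"
    and "lin_rel S" and "selfadjoint S"
    and "rdom T = rdom S" and "rdom S \<subseteq> rdom A"
    and "T = rel_sum S A"
  shows "rimg A 0 \<subseteq> rimg S 0 \<and> rimg S 0 = rimg T 0 \<and>
         (\<forall>x \<in> rdom T. op_part T x = op_part S x + oproj (orth (rimg S 0)) (op_part A x))"
proof -
  note linT = assms(1) and linA = assms(4) and linS = assms(7)
  have S0: "rimg S 0 = orth (rdom S)"
  proof -
    have "rimg S 0 = rimg (adjoint S) 0" using assms(8) unfolding selfadjoint_def by simp
    also have "\<dots> = orth (rdom S)" unfolding rimg_def adjoint_def orth_def rdom_def by auto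
    finally show ?thesis .
  qed
  have A0: "rimg A 0 \<subseteq> rimg S 0"
  proof
    fix g assume "g \<in> rimg A 0"
    then have "(0, g) \<in> adjoint A" using assms(6) unfolding hermitian_def rimg_def by auto
    then have "g \<in> orth (rdom A)" unfolding adjoint_def orth_def rdom_def by auto
    then show "g \<in> rimg S 0" unfolding S0 using orth_mono[OF assms(10)] by blast
  qed
  have subS0: "csub (rimg S 0)" by (rule rimg_csub[OF linS])
  have T0: "rimg S 0 = rimg T 0"
  proof
    show "rimg S 0 \<subseteq> rimg T 0"
    proof
      fix f assume "f \<in> rimg S 0"
      moreover have "(0, 0) \<in> A" using linA unfolding lin_rel_def by simp
      ultimately have "(0, f + 0) \<in> rel_sum S A" unfolding rel_sum_def rimg_def by blast
      then show "f \<in> rimg T 0" using assms(11) by (simp add: rimg_def)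
    qed
    show "rimg T 0 \<subseteq> rimg S 0"
    proof
      fix h assume "h \<in> rimg T 0"
      then obtain f g where "(0, f) \<in> S" "(0, g) \<in> A" "h = f + g"
        using assms(11) unfolding rimg_def rel_sum_def by auto
      then show "h \<in> rimg S 0" using A0 subS0 unfolding csub_def rimg_def by blast
    qed
  qed
  define M where "M = orth (rimg S 0)"
  have subM: "csub M" unfolding M_def by (rule csub_orth)
  have clM: "closed M" unfolding M_def by (rule closed_orth)
  have oM: "orth M = rimg S 0" unfolding M_def S0 by (rule orth3)
  define Q where "Q = oproj M"
  have QM: "Q v \<in> M" and QS: "v - Q v \<in> rimg S 0" for v
    using oproj_props[OF subM clM, of v] unfolding Q_def oM[symmetric] orth_def by auto
  have clA0: "closed (rimg A 0)"
  proof -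
    have "rimg A 0 = (\<lambda>g. (0::'a, g)) -` A" unfolding rimg_def by auto
    moreover have "closed ((\<lambda>g. (0::'a, g)) -` A)"
      by (rule continuous_closed_vimage[OF assms(5)]) (intro continuous_intros)
    ultimately show ?thesis by simp
  qed
  have subA0: "csub (rimg A 0)" by (rule rimg_csub[OF linA])
  have part3: "op_part T x = op_part S x + Q (op_part A x)" if xT: "x \<in> rdom T" for x
  proof -
    have "x \<in> rdom S" using xT assms(9) by simp
    then obtain f where f: "(x, f) \<in> S" unfolding rdom_def by auto
    have "x \<in> rdom A" using xT assms(9,10) by auto
    then obtain h where h: "(x, h) \<in> A" unfolding rdom_def by auto
    define P where "P = oproj (rimg A 0)"
    have PA: "P h \<in> rimg A 0" and Porth: "h - P h \<in> orth (rimg A 0)"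
      using oproj_props[OF subA0 clA0, of h] unfolding P_def orth_def by auto
    define fA where "fA = h - P h"
    have "(x - 0, h - P h) \<in> A" using lin_diff[OF linA h] PA unfolding rimg_def by blast
    then have fAA: "(x, fA) \<in> A" unfolding fA_def by simp
    have opA: "op_part A x = fA" by (rule op_part_eq[OF linA fAA]) (use Porth fA_def in simp)
    have "(0, f - Q f) \<in> S" using QS[of f] unfolding rimg_def by simp
    from lin_diff[OF linS f this] have QfS: "(x, Q f) \<in> S" by simp
    have opS: "op_part S x = Q f" by (rule op_part_eq[OF linS QfS]) (use QM M_def in simp)
    have "(0, fA - Q fA) \<in> S" using QS[of fA] unfolding rimg_def by simp
    from lin_diff[OF linS QfS this] have s1: "(x, Q f - (fA - Q fA)) \<in> S" by simp
    have "(x, Q f - (fA - Q fA) + fA) \<in> rel_sum S A"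
      unfolding rel_sum_def using s1 fAA by blast
    then have tT: "(x, Q f + Q fA) \<in> T" using assms(11) by (simp add: algebra_simps)
    have "Q f + Q fA \<in> orth (rimg T 0)"
      using subM QM[of f] QM[of fA] unfolding csub_def M_def T0 by blast
    then have "op_part T x = Q f + Q fA" by (rule op_part_eq[OF linT tT])
    then show ?thesis using opA opS by simp
  qed
  show ?thesis using A0 T0 part3 unfolding Q_def M_def by blast
qed

end
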